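(* Let $\langle E,\rightarrow\rangle$ be a computation and $b$ a predicate. The slice of $\langle E,\rightarrow\rangle$ with respect to $b$ is lean if and only if $b$ is regular (with respect to $\langle E,\rightarrow\rangle$).
   Context: A directed graph's consistent cuts are the vertex subsets $C$ such that for every edge $(u,v)$, $v\in C$ implies $u\in C$. A computation is a directed graph $\langle E, \rightarrow\rangle$ whose vertices (events) are partitioned among processes $p_1,\dots,p_n$, the events of each process totally ordered, each process $p_i$ having an initial event $\bot_i$ (first) and a final event $\top_i$ (last), whose path relation contains Lamport's happened-before relation, and in which all initial events lie in one strongly connected component and all final events lie in one strongly connected component. $\emptyset$ and $E$ are the trivial consistent cuts; a predicate is a boolean function of process variables evaluated on non-trivial consistent cuts (using variable values after all events of the cut are executed). A predicate $b$ is regular if whenever consistent cuts $C_1,C_2$ satisfy $b$, so do $C_1\cap C_2$ and $C_1\cup C_2$. The slice of $\langle E,\rightarrow\rangle$ with respect to $b$ is a directed graph with vertex set $E$ whose set of consistent cuts contains every consistent cut of $\langle E,\rightarrow\rangle$ satisfying $b$ and which has the least number of consistent cuts among all such directed graphs (it is determined up to having the same set of consistent cuts). The slice is lean if every non-trivial consistent cut of the slice satisfies $b$. *)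

theory Defs
  imports Main
begin

definition consistent_cut :: "'e set \<Rightarrow> ('e \<times> 'e) set \<Rightarrow> 'e set \<Rightarrow> bool" where
  "consistent_cut E G C \<longleftrightarrow> C \<subseteq> E \<and> (\<forall>u v. (u, v) \<in> G \<longrightarrow> v \<in> C \<longrightarrow> u \<in> C)"

definition cuts :: "'e set \<Rightarrow> ('e \<times> 'e) set \<Rightarrow> 'e set set" where
  "cuts E G = {C. consistent_cut E G C}"

definition nontrivial_cut :: "'e set \<Rightarrow> 'e set \<Rightarrow> bool" where
  "nontrivial_cut E C \<longleftrightarrow> C \<noteq> {} \<and> C \<noteq> E"

text \<open>Lamport's happened-before relation is (po \<union> msg)^+, and it must
  be contained in the path relation R^+.\<close>

definition computation ::
  "'e set \<Rightarrow> ('e \<times> 'e) set \<Rightarrow> 'p set \<Rightarrow> ('e \<Rightarrow> 'p) \<Rightarrow> ('e \<times> 'e) set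
     \<Rightarrow> ('p \<Rightarrow> 'e) \<Rightarrow> ('p \<Rightarrow> 'e) \<Rightarrow> ('e \<times> 'e) set \<Rightarrow> bool" where
  "computation E R P proc po ini fin msg \<longleftrightarrow>
     finite E \<and> R \<subseteq> E \<times> E \<and> finite P \<and> P \<noteq> {} \<and> proc ` E = P \<and>
     po \<subseteq> E \<times> E \<and> msg \<subseteq> E \<times> E \<and>
     (\<forall>(e, f) \<in> po. proc e = proc f) \<and>
     trans po \<and> irrefl po \<and>
     (\<forall>e\<in>E. \<forall>f\<in>E. proc e = proc f \<longrightarrow> e = f \<or> (e, f) \<in> po \<or> (f, e) \<in> po) \<and>
     (\<forall>p\<in>P. ini p \<in> E \<and> proc (ini p) = p \<and> fin p \<in> E \<and> proc (fin p) = p \<and>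
        (\<forall>e\<in>E. proc e = p \<longrightarrow> e \<noteq> ini p \<longrightarrow> (ini p, e) \<in> po) \<and>
        (\<forall>e\<in>E. proc e = p \<longrightarrow> e \<noteq> fin p \<longrightarrow> (e, fin p) \<in> po)) \<and>
     (po \<union> msg)\<^sup>+ \<subseteq> R\<^sup>+ \<and>
     (\<forall>p\<in>P. \<forall>q\<in>P. (ini p, ini q) \<in> R\<^sup>* \<and> (fin p, fin q) \<in> R\<^sup>*)"

text \<open>A predicate is modelled as a boolean function of the cut (process variables after
  executing all events of the cut are determined by the cut); it is only ever evaluated
  on non-trivial consistent cuts.\<close>

definition sat_cut :: "'e set \<Rightarrow> ('e \<times> 'e) set \<Rightarrow> ('e set \<Rightarrow> bool) \<Rightarrow> 'e set \<Rightarrow> bool" where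
  "sat_cut E R b C \<longleftrightarrow> consistent_cut E R C \<and> nontrivial_cut E C \<and> b C"

definition regular :: "'e set \<Rightarrow> ('e \<times> 'e) set \<Rightarrow> ('e set \<Rightarrow> bool) \<Rightarrow> bool" where
  "regular E R b \<longleftrightarrow>
     (\<forall>C1 C2. sat_cut E R b C1 \<longrightarrow> sat_cut E R b C2 \<longrightarrow>
        sat_cut E R b (C1 \<inter> C2) \<and> sat_cut E R b (C1 \<union> C2))"

definition is_slice ::
  "'e set \<Rightarrow> ('e \<times> 'e) set \<Rightarrow> ('e set \<Rightarrow> bool) \<Rightarrow> ('e \<times> 'e) set \<Rightarrow> bool" where
  "is_slice E R b S \<longleftrightarrow>
     S \<subseteq> E \<times> E \<and> {C. sat_cut E R b C} \<subseteq> cuts E S \<and>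
     (\<forall>S'. S' \<subseteq> E \<times> E \<longrightarrow> {C. sat_cut E R b C} \<subseteq> cuts E S' \<longrightarrow>
        card (cuts E S) \<le> card (cuts E S'))"

definition lean :: "'e set \<Rightarrow> ('e set \<Rightarrow> bool) \<Rightarrow> ('e \<times> 'e) set \<Rightarrow> bool" where
  "lean E b S \<longleftrightarrow> (\<forall>C. consistent_cut E S C \<longrightarrow> nontrivial_cut E C \<longrightarrow> b C)"

end

theory Submission
  imports Defs
begin

lemma cut_down:
  assumes "consistent_cut E R C" "(x, y) \<in> R\<^sup>*" "y \<in> C"
  shows "x \<in> C"
  using assms(2,3)
proof (induction rule: converse_rtrancl_induct)
  case base
  then show ?case .
next
  case (step a z)
  then show ?case using assms(1) unfolding consistent_cut_def by blast
qed

lemma cuts_int: "consistent_cut E S A \<Longrightarrow> consistent_cut E S B \<Longrightarrow> consistent_cut E S (A \<inter> B)"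
  unfolding consistent_cut_def by blast

lemma cuts_un: "consistent_cut E S A \<Longrightarrow> consistent_cut E S B \<Longrightarrow> consistent_cut E S (A \<union> B)"
  unfolding consistent_cut_def by blast

lemma inter_closed:
  assumes "finite F" "F \<noteq> {}" "F \<subseteq> L" "\<And>A B. A \<in> L \<Longrightarrow> B \<in> L \<Longrightarrow> A \<inter> B \<in> L"
  shows "\<Inter>F \<in> L"
  using assms(1,2,3)
proof (induction F rule: finite_ne_induct)
  case (singleton x) then show ?case by simp
next
  case (insert x F) then show ?case using assms(4) by simp
qed

lemma union_closed:
  assumes "finite F" "F \<subseteq> L" "{} \<in> L" "\<And>A B. A \<in> L \<Longrightarrow> B \<in> L \<Longrightarrow> A \<union> B \<in> L"
  shows "\<Union>F \<in> L"
  using assms(1,2)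
proof (induction F rule: finite_induct)
  case empty then show ?case using assms(3) by simp
next
  case (insert x F) then show ?case using assms(4) by simp
qed

lemma birkhoff:
  assumes fin: "finite E" and sub: "L \<subseteq> Pow E" and e0: "{} \<in> L" and eE: "E \<in> L"
    and ci: "\<And>A B. A \<in> L \<Longrightarrow> B \<in> L \<Longrightarrow> A \<inter> B \<in> L"
    and cu: "\<And>A B. A \<in> L \<Longrightarrow> B \<in> L \<Longrightarrow> A \<union> B \<in> L"
  shows "\<exists>S \<subseteq> E \<times> E. cuts E S = L"
proof -
  define S where "S = {(u, v). u \<in> E \<and> v \<in> E \<and> (\<forall>C\<in>L. v \<in> C \<longrightarrow> u \<in> C)}"
  have finL: "finite L" using sub fin by (meson finite_Pow_iff finite_subset)
  define J where "J v = \<Inter>{D\<in>L. v \<in> D}" for v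
  have JL: "J v \<in> L" if "v \<in> E" for v
    unfolding J_def
    apply (rule inter_closed[OF _ _ _ ci])
    using finL eE that by auto
  have "cuts E S = L"
  proof
    show "L \<subseteq> cuts E S"
      using sub unfolding cuts_def consistent_cut_def S_def by auto
  next
    show "cuts E S \<subseteq> L"
    proof
      fix C assume "C \<in> cuts E S"
      hence cc: "C \<subseteq> E" "\<And>u v. (u, v) \<in> S \<Longrightarrow> v \<in> C \<Longrightarrow> u \<in> C"
        unfolding cuts_def consistent_cut_def by auto
      have "J v \<subseteq> C" if "v \<in> C" for v
      proof
        fix u assume u: "u \<in> J v"
        have "J v \<subseteq> E" using JL[of v] that cc(1) sub by auto
        hence "(u, v) \<in> S" using u that cc(1) unfolding S_def J_def by auto
        thus "u \<in> C" using cc(2) that by blast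
      qed
      moreover have "v \<in> J v" for v unfolding J_def by auto
      ultimately have "C = \<Union>(J ` C)" by blast
      moreover have "\<Union>(J ` C) \<in> L"
        apply (rule union_closed[OF _ _ e0 cu])
        using cc(1) fin finite_subset JL by auto
      ultimately show "C \<in> L" by simp
    qed
  qed
  moreover have "S \<subseteq> E \<times> E" unfolding S_def by auto
  ultimately show ?thesis by blast
qed

theorem theorem5:
  fixes E :: "'e set" and R :: "('e \<times> 'e) set" and P :: "'p set"
    and proc :: "'e \<Rightarrow> 'p" and po msg :: "('e \<times> 'e) set"
    and ini fin :: "'p \<Rightarrow> 'e" and b :: "'e set \<Rightarrow> bool" and S :: "('e \<times> 'e) set"
  assumes "computation E R P proc po ini fin msg"
    and "is_slice E R b S"
  shows "lean E b S \<longleftrightarrow> regular E R b"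
proof -
  note C = assms(1)[unfolded computation_def]
  have finE: "finite E" and RE: "R \<subseteq> E \<times> E" and Pne: "P \<noteq> {}" and procE: "proc ` E = P"
    using C by auto
  have poR: "(e, f) \<in> R\<^sup>*" if "(e, f) \<in> po" for e f
  proof -
    have "(e, f) \<in> (po \<union> msg)\<^sup>+" using that by auto
    hence "(e, f) \<in> R\<^sup>+" using C by blast
    thus ?thesis by simp
  qed
  have ini_in: "ini q \<in> X" if X: "consistent_cut E R X" "e \<in> X" "q \<in> P" for X e q
  proof -
    have eE: "e \<in> E" using X unfolding consistent_cut_def by auto
    define p where "p = proc e"
    have pP: "p \<in> P" using procE eE p_def by auto
    have "ini p \<in> X"
    proof (cases "e = ini p")
      case True then show ?thesis using X by simp
    next
      case False
      hence "(ini p, e) \<in> po" using C pP eE p_def by auto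
      thus ?thesis using cut_down[OF X(1) poR X(2)] by blast
    qed
    moreover have "(ini q, ini p) \<in> R\<^sup>*" using C pP X(3) by auto
    ultimately show ?thesis using cut_down[OF X(1)] by blast
  qed
  have fin_out: "fin q \<notin> X" if X: "consistent_cut E R X" "e \<in> E" "e \<notin> X" "q \<in> P" for X e q
  proof
    assume fq: "fin q \<in> X"
    define p where "p = proc e"
    have pP: "p \<in> P" using procE X(2) p_def by auto
    have "(fin p, fin q) \<in> R\<^sup>*" using C pP X(4) by auto
    hence fp: "fin p \<in> X" using cut_down[OF X(1)] fq by blast
    show False
    proof (cases "e = fin p")
      case True then show ?thesis using X fp by simp
    next
      case False
      hence "(e, fin p) \<in> po" using C pP X(2) p_def by auto
      thus ?thesis using cut_down[OF X(1) poR fp] X(3) by blast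
    qed
  qed
  have finP: "fin q \<in> E" if "q \<in> P" for q using C that by auto
  note sl = assms(2)[unfolded is_slice_def]
  have satS: "consistent_cut E S X" if "sat_cut E R b X" for X
    using sl that unfolding cuts_def by auto
  show ?thesis
  proof
    assume ln: "lean E b S"
    show "regular E R b"
      unfolding regular_def
    proof (intro allI impI conjI)
      fix C1 C2 assume s1: "sat_cut E R b C1" and s2: "sat_cut E R b C2"
      have c1: "consistent_cut E R C1" "C1 \<noteq> {}" "C1 \<noteq> E" using s1 unfolding sat_cut_def nontrivial_cut_def by auto
      have c2: "consistent_cut E R C2" "C2 \<noteq> {}" "C2 \<noteq> E" using s2 unfolding sat_cut_def nontrivial_cut_def by auto
      obtain q where q: "q \<in> P" using Pne by blast
      obtain e1 where "e1 \<in> C1" using c1 by blast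
      obtain e2 where "e2 \<in> C2" using c2 by blast
      have i: "ini q \<in> C1 \<inter> C2" using ini_in c1 c2 q \<open>e1 \<in> C1\<close> \<open>e2 \<in> C2\<close> by blast
      have C1E: "C1 \<subseteq> E" "C2 \<subseteq> E" using c1 c2 unfolding consistent_cut_def by auto
      obtain f1 where "f1 \<in> E" "f1 \<notin> C1" using c1 C1E by blast
      obtain f2 where "f2 \<in> E" "f2 \<notin> C2" using c2 C1E by blast
      have f: "fin q \<notin> C1 \<union> C2" using fin_out c1 c2 q \<open>f1 \<in> E\<close> \<open>f1 \<notin> C1\<close> \<open>f2 \<in> E\<close> \<open>f2 \<notin> C2\<close> by blast
      have nt1: "nontrivial_cut E (C1 \<inter> C2)" using i f finP[OF q] unfolding nontrivial_cut_def by auto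
      have nt2: "nontrivial_cut E (C1 \<union> C2)" using i f finP[OF q] unfolding nontrivial_cut_def by auto
      have "consistent_cut E S (C1 \<inter> C2)" "consistent_cut E S (C1 \<union> C2)"
        using cuts_int cuts_un satS s1 s2 by blast+
      hence "b (C1 \<inter> C2)" "b (C1 \<union> C2)" using ln nt1 nt2 unfolding lean_def by auto
      thus "sat_cut E R b (C1 \<inter> C2)" "sat_cut E R b (C1 \<union> C2)"
        unfolding sat_cut_def using nt1 nt2 cuts_int[OF c1(1) c2(1)] cuts_un[OF c1(1) c2(1)] by auto
    qed
  next
    assume rg: "regular E R b"
    define L where "L = {C. sat_cut E R b C} \<union> {{}, E}"
    have satE: "X \<subseteq> E" if "sat_cut E R b X" for X
      using that unfolding sat_cut_def consistent_cut_def by auto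
    have "\<exists>S0 \<subseteq> E \<times> E. cuts E S0 = L"
    proof (rule birkhoff[OF finE])
      show "L \<subseteq> Pow E" using satE unfolding L_def by auto
      show "{} \<in> L" "E \<in> L" unfolding L_def by auto
      show "A \<inter> B \<in> L" if "A \<in> L" "B \<in> L" for A B
        using that rg satE unfolding L_def regular_def
        by (auto simp: Int_absorb1 Int_absorb2)
      show "A \<union> B \<in> L" if "A \<in> L" "B \<in> L" for A B
        using that rg satE unfolding L_def regular_def
        by (auto simp: Un_absorb1 Un_absorb2)
    qed
    then obtain S0 where S0: "S0 \<subseteq> E \<times> E" "cuts E S0 = L" by blast
    have "{C. sat_cut E R b C} \<subseteq> cuts E S0" using S0 L_def by auto
    hence cardle: "card (cuts E S) \<le> card L" using sl S0 by metis
    have sub: "L \<subseteq> cuts E S"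
      using sl unfolding L_def cuts_def consistent_cut_def by auto
    have "finite (cuts E S)"
      using finE unfolding cuts_def consistent_cut_def
      by (metis (no_types, lifting) Collect_mono Pow_def finite_Pow_iff finite_subset)
    hence eq: "cuts E S = L" using card_seteq[OF _ sub cardle] by simp
    show "lean E b S"
      unfolding lean_def
    proof (intro allI impI)
      fix X assume "consistent_cut E S X" "nontrivial_cut E X"
      hence "X \<in> L" using eq unfolding cuts_def by auto
      thus "b X" using \<open>nontrivial_cut E X\<close> unfolding L_def sat_cut_def nontrivial_cut_def by auto
    qed
  qed
qed

end
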